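(* Let $M=[a_{ij},b_{ij}]_{i,j\in\{1,2\}}$ and $\widehat M=[\hat a_{ij},\hat b_{ij}]_{i,j\in\{1,2\}}$ be $2\times2$ 2-person normal form game matrices and put $c_{ij}=\hat a_{ij}-a_{ij}$. Then $\widehat M$ can be obtained from $M$ by an OI-transformation if and only if $a_{ij}+b_{ij}=\hat a_{ij}+\hat b_{ij}$ for all $i,j\in\{1,2\}$ and $c_{11}+c_{22}=c_{12}+c_{21}$.
   Context: A 2-person normal form game matrix of dimensions $n\times m$ is $M=[a_{ij},b_{ij}]_{i\le n,\,j\le m}$, where $(a_{ij},b_{ij})\in\mathbb{R}^2$ are the payoffs of the row player $A$ and column player $B$ when $A$ plays strategy $A_i$ and $B$ plays $B_j$. A preplay offer by $A$ to $B$ of amount $\delta\ge 0$ contingent on $B_j$ replaces $(a_{ij},b_{ij})$ by $(a_{ij}-\delta,b_{ij}+\delta)$ for every $i$ (other entries unchanged); a preplay offer by $B$ to $A$ of amount $\delta\ge0$ contingent on $A_i$ replaces $(a_{ij},b_{ij})$ by $(a_{ij}+\delta,b_{ij}-\delta)$ for every $j$. Each such map is a POI-transformation; an OI-transformation is a composition of finitely many POI-transformations (all amounts non-negative). *)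

theory Defs
  imports Complex_Main "HOL-Library.Numeral_Type"
begin

text \<open>A 2-person normal form game with row strategies indexed by the finite type 'r
and column strategies indexed by the finite type 'c: entry (i,j) is the payoff pair
(a_ij, b_ij) of the row player A and the column player B.\<close>
type_synonym ('r, 'c) game = "'r \<Rightarrow> 'c \<Rightarrow> real \<times> real"

definition offer_A :: "'c \<Rightarrow> real \<Rightarrow> ('r, 'c) game \<Rightarrow> ('r, 'c) game" where
  "offer_A j d M = (\<lambda>i j'. if j' = j then (fst (M i j') - d, snd (M i j') + d) else M i j')"

definition offer_B :: "'r \<Rightarrow> real \<Rightarrow> ('r, 'c) game \<Rightarrow> ('r, 'c) game" where
  "offer_B i d M = (\<lambda>i' j. if i' = i then (fst (M i' j) + d, snd (M i' j) - d) else M i' j)"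

inductive POI :: "('r, 'c) game \<Rightarrow> ('r, 'c) game \<Rightarrow> bool" where
  POI_A: "d \<ge> 0 \<Longrightarrow> POI M (offer_A j d M)"
| POI_B: "d \<ge> 0 \<Longrightarrow> POI M (offer_B i d M)"

definition OI :: "('r, 'c) game \<Rightarrow> ('r, 'c) game \<Rightarrow> bool" where
  "OI M M' = POI\<^sup>*\<^sup>* M M'"

end

theory Submission
  imports Defs
begin

lemma two_cases: "(i::2) = 0 \<or> i = 1"
proof (induct i)
  case (of_int z)
  then have "z = 0 \<or> z = 1" by simp arith
  then show ?case by auto
qed

lemma all2: "(\<forall>i::2. P i) \<longleftrightarrow> P 0 \<and> P 1"
  using two_cases by metis

definition inv1 :: "(2,2) game \<Rightarrow> (2,2) game \<Rightarrow> bool" where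
  "inv1 M Mh \<longleftrightarrow> ((\<forall>i j. fst (M i j) + snd (M i j) = fst (Mh i j) + snd (Mh i j)) \<and>
     (fst (Mh 0 0) - fst (M 0 0)) + (fst (Mh 1 1) - fst (M 1 1)) =
     (fst (Mh 0 1) - fst (M 0 1)) + (fst (Mh 1 0) - fst (M 1 0)))"

lemma fwd: "POI\<^sup>*\<^sup>* M Mh \<Longrightarrow> inv1 M Mh"
proof (induction rule: rtranclp_induct)
  case base
  then show ?case by (simp add: inv1_def)
next
  case (step y z)
  from step(2) show ?case
  proof cases
    case (POI_A d j)
    then show ?thesis using step(3) two_cases[of j]
      by (auto simp: inv1_def offer_A_def)
  next
    case (POI_B d i)
    then show ?thesis using step(3) two_cases[of i]
      by (auto simp: inv1_def offer_B_def)
  qed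
qed

theorem corollary1:
  fixes M Mh :: "(2, 2) game"
  shows "OI M Mh \<longleftrightarrow>
    ((\<forall>i j. fst (M i j) + snd (M i j) = fst (Mh i j) + snd (Mh i j)) \<and>
     (fst (Mh 0 0) - fst (M 0 0)) + (fst (Mh 1 1) - fst (M 1 1)) =
     (fst (Mh 0 1) - fst (M 0 1)) + (fst (Mh 1 0) - fst (M 1 0)))"
  (is "_ \<longleftrightarrow> ?P")
proof
  assume "OI M Mh"
  then show "?P" using fwd[of M Mh] by (simp add: OI_def inv1_def)
next
  assume H: ?P
  define c where "c i j = fst (Mh i j) - fst (M i j)" for i j
  define t where "t = \<bar>c 0 0\<bar> + \<bar>c 1 0\<bar> + \<bar>c 0 0 - c 0 1\<bar>"
  define e0 where "e0 = c 0 0 + t"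
  define e1 where "e1 = c 1 0 + t"
  define d0 where "d0 = t"
  define d1 where "d1 = c 0 0 - c 0 1 + t"
  have nn: "e0 \<ge> 0" "e1 \<ge> 0" "d0 \<ge> 0" "d1 \<ge> 0"
    unfolding e0_def e1_def d0_def d1_def t_def by linarith+
  define M1 where "M1 = offer_B 0 e0 M"
  define M2 where "M2 = offer_B 1 e1 M1"
  define M3 where "M3 = offer_A 0 d0 M2"
  define M4 where "M4 = offer_A 1 d1 M3"
  have "POI M M1" unfolding M1_def by (rule POI_B) (rule nn)
  moreover have "POI M1 M2" unfolding M2_def by (rule POI_B) (rule nn)
  moreover have "POI M2 M3" unfolding M3_def by (rule POI_A) (rule nn)
  moreover have "POI M3 M4" unfolding M4_def by (rule POI_A) (rule nn)
  ultimately have r: "POI\<^sup>*\<^sup>* M M4" by simp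
  have "M4 = Mh"
  proof (intro ext)
    fix i j :: 2
    have s: "fst (M i j) + snd (M i j) = fst (Mh i j) + snd (Mh i j)" using H by blast
    have eq: "c 0 0 + c 1 1 = c 0 1 + c 1 0" using H unfolding c_def by linarith
    have "fst (M4 i j) = fst (Mh i j)"
      using two_cases[of i] two_cases[of j] eq
      by (auto simp: M4_def M3_def M2_def M1_def offer_A_def offer_B_def e0_def e1_def d0_def d1_def c_def)
    moreover have "snd (M4 i j) = snd (Mh i j)"
      using two_cases[of i] two_cases[of j] eq s
      by (auto simp: M4_def M3_def M2_def M1_def offer_A_def offer_B_def e0_def e1_def d0_def d1_def c_def)
    ultimately show "M4 i j = Mh i j" by (simp add: prod_eq_iff)
  qed
  with r show "OI M Mh" by (simp add: OI_def)
qed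

end
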